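(* Let $(\hat\xi,\hat\tau)$ be a maximizer of $\mathrm E_n[\log\{1+\mathcal F(\xi+q(\cdot;\tau))\}]$ over $\xi\in\mathbb R$, $\tau\in\Theta_\tau$ (restricted to parameters for which $1+\mathcal F(\xi+q(\cdot;\tau))(x^{(i)},a^{(i)})>0$ for all $i$), assumed to exist, and define $$\hat c=\mathrm E_n\Big[\frac{1}{1+\mathcal F(\hat\xi+q(\cdot;\hat\tau))}\Big],\qquad \hat\beta_{\mathrm{emp}}=\mathrm E_n\Big[\frac{\hat c^{-1}\,w\,r}{1+\mathcal F(\hat\xi+q(\cdot;\hat\tau))}\Big].$$ Then (1-boundedness) $0\le\hat\beta_{\mathrm{emp}}\le R_{\max}$; and (stability) if, conditionally on $\mathcal D_{x,a}=\{(x^{(i)},a^{(i)})\}_{i=1}^n$, the rewards $r^{(1)},\dots,r^{(n)}$ are independent with $\mathrm{var}(r^{(i)}\mid\mathcal D_{x,a})\le\sigma^2$ for all $i$, then $\mathrm{var}(\hat\beta_{\mathrm{emp}}\mid\mathcal D_{x,a})\le\sigma^2$.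
   Context: Contextual bandit setting. $\mathcal A$ is a finite action set. The data are $n$ i.i.d. triples $(x^{(i)},a^{(i)},r^{(i)})$, each distributed as $(x,a,r)$ where $x\sim P_0$, $a\mid x\sim\pi_b(\cdot\mid x)$ and $r\mid(x,a)\sim P_r(x,a)$ with $r\in[0,R_{\max}]$. $\pi_e$ is the evaluation policy, overlap holds, and $w=w(x,a)=\pi_e(a|x)/\pi_b(a|x)$ is bounded. $\mathrm E_n[f]=n^{-1}\sum_{i=1}^n f(x^{(i)},a^{(i)},r^{(i)})$. For $m:\mathcal X\times\mathcal A\to\mathbb R$, $\mathcal F(m)(x,a)=w(x,a)m(x,a)-\sum_{a'\in\mathcal A}m(x,a')\pi_e(a'|x)$; note $\mathcal F(\xi+q)=\xi(w-1)+\mathcal F(q)$ for a constant $\xi$. A Q-function model $q(x,a;\tau)$, $\tau\in\Theta_\tau$, with $|q|\le R_{\max}$. *)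

theory Defs
  imports "HOL-Probability.Probability"
begin

definition iw :: "('x \<Rightarrow> 'a \<Rightarrow> real) \<Rightarrow> ('x \<Rightarrow> 'a \<Rightarrow> real) \<Rightarrow> 'x \<Rightarrow> 'a \<Rightarrow> real" where
  "iw pe pb x a = pe x a / pb x a"

definition Fop :: "'a set \<Rightarrow> ('x \<Rightarrow> 'a \<Rightarrow> real) \<Rightarrow> ('x \<Rightarrow> 'a \<Rightarrow> real)
                  \<Rightarrow> ('x \<Rightarrow> 'a \<Rightarrow> real) \<Rightarrow> 'x \<Rightarrow> 'a \<Rightarrow> real" where
  "Fop A pe pb m x a = iw pe pb x a * m x a - (\<Sum>a'\<in>A. m x a' * pe x a')"

definition En :: "nat \<Rightarrow> (nat \<Rightarrow> real) \<Rightarrow> real" where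
  "En n f = (\<Sum>i<n. f i) / real n"

definition denom :: "'a set \<Rightarrow> ('x \<Rightarrow> 'a \<Rightarrow> real) \<Rightarrow> ('x \<Rightarrow> 'a \<Rightarrow> real)
      \<Rightarrow> ('x \<Rightarrow> 'a \<Rightarrow> 't \<Rightarrow> real) \<Rightarrow> (nat \<Rightarrow> 'x) \<Rightarrow> (nat \<Rightarrow> 'a) \<Rightarrow> real \<Rightarrow> 't \<Rightarrow> nat \<Rightarrow> real" where
  "denom A pe pb q xs as \<xi> \<tau> i = 1 + Fop A pe pb (\<lambda>x a. \<xi> + q x a \<tau>) (xs i) (as i)"

definition feasible where
  "feasible A pe pb q xs as n \<xi> \<tau> \<longleftrightarrow> (\<forall>i<n. denom A pe pb q xs as \<xi> \<tau> i > 0)"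

definition obj where
  "obj A pe pb q xs as n \<xi> \<tau> = En n (\<lambda>i. ln (denom A pe pb q xs as \<xi> \<tau> i))"

definition is_maximizer where
  "is_maximizer A pe pb q \<Theta> xs as n \<xi>h \<tau>h \<longleftrightarrow>
     \<tau>h \<in> \<Theta> \<and> feasible A pe pb q xs as n \<xi>h \<tau>h \<and>
     (\<forall>\<xi>. \<forall>\<tau>\<in>\<Theta>. feasible A pe pb q xs as n \<xi> \<tau> \<longrightarrow>
        obj A pe pb q xs as n \<xi> \<tau> \<le> obj A pe pb q xs as n \<xi>h \<tau>h)"

definition chat where
  "chat A pe pb q xs as n \<xi>h \<tau>h = En n (\<lambda>i. 1 / denom A pe pb q xs as \<xi>h \<tau>h i)"

definition beta_emp where
  "beta_emp A pe pb q xs as n \<xi>h \<tau>h r =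
     En n (\<lambda>i. inverse (chat A pe pb q xs as n \<xi>h \<tau>h) * iw pe pb (xs i) (as i) * r i
                / denom A pe pb q xs as \<xi>h \<tau>h i)"

text \<open>Variance, literally as in the library's prob_space abbreviation.\<close>
definition var_of :: "'w measure \<Rightarrow> ('w \<Rightarrow> real) \<Rightarrow> real" where
  "var_of M X = integral\<^sup>L M (\<lambda>\<omega>. (X \<omega> - integral\<^sup>L M X)\<^sup>2)"

end

theory Submission imports Defs begin

lemma var_lin:
  fixes M :: "'w measure" and R :: "nat \<Rightarrow> 'w \<Rightarrow> real"
  assumes P: "prob_space M" and fin: "finite I"
    and meas: "\<And>i. i \<in> I \<Longrightarrow> R i \<in> borel_measurable M"
    and bnd: "\<And>i \<omega>. i \<in> I \<Longrightarrow> \<omega> \<in> space M \<Longrightarrow> \<bar>R i \<omega>\<bar> \<le> B"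
    and ind: "prob_space.indep_vars M (\<lambda>_. borel) R I"
  shows "var_of M (\<lambda>\<omega>. \<Sum>i\<in>I. c i * R i \<omega>) = (\<Sum>i\<in>I. (c i)\<^sup>2 * var_of M (R i))"
proof -
  interpret prob_space M by (rule P)
  define \<mu> where "\<mu> i = integral\<^sup>L M (R i)" for i
  define Y where "Y i \<omega> = R i \<omega> - \<mu> i" for i \<omega>
  have intR: "integrable M (R i)" if "i \<in> I" for i
    using that meas bnd by (intro integrable_const_bound[where B=B]) auto
  have measY: "Y i \<in> borel_measurable M" if "i \<in> I" for i
    using meas[OF that] unfolding Y_def by measurable
  have bY: "\<bar>Y i \<omega>\<bar> \<le> B + \<bar>\<mu> i\<bar>" if "i \<in> I" "\<omega> \<in> space M" for i \<omega>
    using bnd[OF that] unfolding Y_def by linarith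
  have intYY: "integrable M (\<lambda>\<omega>. Y i \<omega> * Y j \<omega>)" if "i \<in> I" "j \<in> I" for i j
  proof (rule integrable_const_bound[where B="(B + \<bar>\<mu> i\<bar>) * (B + \<bar>\<mu> j\<bar>)"])
    show "AE x in M. norm (Y i x * Y j x) \<le> (B + \<bar>\<mu> i\<bar>) * (B + \<bar>\<mu> j\<bar>)"
    proof (rule AE_I2)
      fix x assume x: "x \<in> space M"
      have a: "\<bar>Y i x\<bar> \<le> B + \<bar>\<mu> i\<bar>" "\<bar>Y j x\<bar> \<le> B + \<bar>\<mu> j\<bar>" using bY that x by auto
      then have "0 \<le> B + \<bar>\<mu> i\<bar>" by (meson abs_ge_zero order_trans)
      then show "norm (Y i x * Y j x) \<le> (B + \<bar>\<mu> i\<bar>) * (B + \<bar>\<mu> j\<bar>)"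
        using a by (simp add: abs_mult mult_mono)
    qed
    show "(\<lambda>\<omega>. Y i \<omega> * Y j \<omega>) \<in> borel_measurable M" using measY that by measurable
  qed
  have EY: "integral\<^sup>L M (Y i) = 0" if "i \<in> I" for i
    unfolding Y_def \<mu>_def using intR[OF that] by (simp add: prob_space)
  have cross: "integral\<^sup>L M (\<lambda>\<omega>. Y i \<omega> * Y j \<omega>) = (if i = j then var_of M (R i) else 0)"
    if "i \<in> I" "j \<in> I" for i j
  proof (cases "i = j")
    case True then show ?thesis unfolding var_of_def Y_def \<mu>_def by (simp add: power2_eq_square)
  next
    case False
    have indY: "indep_vars (\<lambda>_. borel) Y I"
      unfolding Y_def[abs_def]
      by (rule indep_vars_compose2[OF ind, where Y="\<lambda>i x. x - \<mu> i" and N="\<lambda>_. borel", simplified]) measurable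
    have ind2: "indep_vars (\<lambda>_. borel) Y {i, j}"
      by (rule indep_vars_subset[OF indY]) (use that in auto)
    have intY: "integrable M (Y k)" if "k \<in> I" for k
      unfolding Y_def using intR[OF that] by simp
    have "integral\<^sup>L M (\<lambda>\<omega>. \<Prod>k\<in>{i,j}. Y k \<omega>) = (\<Prod>k\<in>{i,j}. integral\<^sup>L M (Y k))"
      by (rule indep_vars_lebesgue_integral[OF _ ind2]) (use that intY in auto)
    then show ?thesis using False EY that by simp
  qed
  have Esum: "integral\<^sup>L M (\<lambda>\<omega>. \<Sum>i\<in>I. c i * R i \<omega>) = (\<Sum>i\<in>I. c i * \<mu> i)"
  proof -
    have "integral\<^sup>L M (\<lambda>\<omega>. \<Sum>i\<in>I. c i * R i \<omega>) = (\<Sum>i\<in>I. integral\<^sup>L M (\<lambda>\<omega>. c i * R i \<omega>))"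
      by (rule Bochner_Integration.integral_sum[where f="\<lambda>i \<omega>. c i * R i \<omega>"]) (use intR in auto)
    then show ?thesis unfolding \<mu>_def by simp
  qed
  have "var_of M (\<lambda>\<omega>. \<Sum>i\<in>I. c i * R i \<omega>) =
      integral\<^sup>L M (\<lambda>\<omega>. \<Sum>i\<in>I. \<Sum>j\<in>I. c i * c j * (Y i \<omega> * Y j \<omega>))"
    unfolding var_of_def Esum
  proof (rule Bochner_Integration.integral_cong[OF refl])
    fix \<omega> assume "\<omega> \<in> space M"
    have "(\<Sum>i\<in>I. c i * R i \<omega>) - (\<Sum>i\<in>I. c i * \<mu> i) = (\<Sum>i\<in>I. c i * Y i \<omega>)"
      by (simp add: Y_def sum_subtractf[symmetric] right_diff_distrib)
    then show "((\<Sum>i\<in>I. c i * R i \<omega>) - (\<Sum>i\<in>I. c i * \<mu> i))\<^sup>2 = (\<Sum>i\<in>I. \<Sum>j\<in>I. c i * c j * (Y i \<omega> * Y j \<omega>))"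
      by (simp add: power2_eq_square sum_product mult_ac)
  qed
  also have "\<dots> = (\<Sum>i\<in>I. \<Sum>j\<in>I. c i * c j * integral\<^sup>L M (\<lambda>\<omega>. Y i \<omega> * Y j \<omega>))"
    using intYY by (simp add: Bochner_Integration.integral_sum[where f="\<lambda>i \<omega>. \<Sum>j\<in>I. c i * c j * (Y i \<omega> * Y j \<omega>)"] Bochner_Integration.integral_sum integrable_sum)
  also have "\<dots> = (\<Sum>i\<in>I. (c i)\<^sup>2 * var_of M (R i))"
  proof (rule sum.cong[OF refl])
    fix i assume i: "i \<in> I"
    have "(\<Sum>j\<in>I. c i * c j * integral\<^sup>L M (\<lambda>\<omega>. Y i \<omega> * Y j \<omega>)) =
          (\<Sum>j\<in>I. if i = j then c i * c j * var_of M (R i) else 0)"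
      by (rule sum.cong[OF refl]) (use cross i in auto)
    also have "\<dots> = (c i)\<^sup>2 * var_of M (R i)" using fin i by (simp add: sum.delta power2_eq_square)
    finally show "(\<Sum>j\<in>I. c i * c j * integral\<^sup>L M (\<lambda>\<omega>. Y i \<omega> * Y j \<omega>)) = (c i)\<^sup>2 * var_of M (R i)" .
  qed
  finally show ?thesis .
qed

lemma denom_lin:
  assumes "(\<Sum>a\<in>A. pe (xs i) a) = 1"
  shows "denom A pe pb q xs as \<xi> \<tau> i = 1 + \<xi> * (iw pe pb (xs i) (as i) - 1) + Fop A pe pb (\<lambda>x a. q x a \<tau>) (xs i) (as i)"
proof -
  have "(\<Sum>a'\<in>A. (\<xi> + q (xs i) a' \<tau>) * pe (xs i) a') = \<xi> * (\<Sum>a\<in>A. pe (xs i) a) + (\<Sum>a'\<in>A. q (xs i) a' \<tau> * pe (xs i) a')"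
    by (simp add: distrib_right sum.distrib sum_distrib_left)
  then show ?thesis using assms unfolding denom_def Fop_def by (simp add: algebra_simps)
qed

theorem lemma1:
  fixes A :: "'a set"
    and pe pb :: "'x \<Rightarrow> 'a \<Rightarrow> real"
    and q :: "'x \<Rightarrow> 'a \<Rightarrow> 't \<Rightarrow> real"
    and \<Theta> :: "'t set"
    and xs :: "nat \<Rightarrow> 'x" and as :: "nat \<Rightarrow> 'a"
    and n :: nat and Rmax \<xi>h :: real and \<tau>h :: 't
  assumes finA: "finite A"
    and pe_dist: "\<And>x. (\<forall>a\<in>A. 0 \<le> pe x a) \<and> (\<Sum>a\<in>A. pe x a) = 1"
    and pb_dist: "\<And>x. (\<forall>a\<in>A. 0 \<le> pb x a) \<and> (\<Sum>a\<in>A. pb x a) = 1"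
    and overlap: "\<And>x a. a \<in> A \<Longrightarrow> pe x a > 0 \<Longrightarrow> pb x a > 0"
    and w_bdd: "\<exists>B. \<forall>x. \<forall>a\<in>A. pb x a > 0 \<longrightarrow> iw pe pb x a \<le> B"
    and q_bdd: "\<And>x a \<tau>. a \<in> A \<Longrightarrow> \<tau> \<in> \<Theta> \<Longrightarrow> \<bar>q x a \<tau>\<bar> \<le> Rmax"
    and n_pos: "n > 0"
    and data: "\<And>i. i < n \<Longrightarrow> as i \<in> A \<and> pb (xs i) (as i) > 0"
    and maxi: "is_maximizer A pe pb q \<Theta> xs as n \<xi>h \<tau>h"
  shows "(\<forall>r. (\<forall>i<n. 0 \<le> r i \<and> r i \<le> Rmax) \<longrightarrow>
            0 \<le> beta_emp A pe pb q xs as n \<xi>h \<tau>h r \<and>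
            beta_emp A pe pb q xs as n \<xi>h \<tau>h r \<le> Rmax)
       \<and> (\<forall>(M :: 'w measure) (R :: nat \<Rightarrow> 'w \<Rightarrow> real) (\<sigma> :: real).
            prob_space M \<and>
            (\<forall>i<n. R i \<in> borel_measurable M \<and> (\<forall>\<omega>\<in>space M. 0 \<le> R i \<omega> \<and> R i \<omega> \<le> Rmax)) \<and>
            prob_space.indep_vars M (\<lambda>_. borel) R {..<n} \<and>
            (\<forall>i<n. var_of M (R i) \<le> \<sigma>\<^sup>2)
            \<longrightarrow> var_of M (\<lambda>\<omega>. beta_emp A pe pb q xs as n \<xi>h \<tau>h (\<lambda>i. R i \<omega>)) \<le> \<sigma>\<^sup>2)"
proof -
  define w where "w i = iw pe pb (xs i) (as i)" for i
  define G where "G i = Fop A pe pb (\<lambda>x a. q x a \<tau>h) (xs i) (as i)" for i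
  define D where "D i = denom A pe pb q xs as \<xi>h \<tau>h i" for i
  have sumpe: "(\<Sum>a\<in>A. pe x a) = 1" for x using pe_dist by blast
  have Dlin: "denom A pe pb q xs as y \<tau>h i = 1 + y * (w i - 1) + G i" for y i
    unfolding w_def G_def by (rule denom_lin[OF sumpe])
  have tauh: "\<tau>h \<in> \<Theta>" and feas: "feasible A pe pb q xs as n \<xi>h \<tau>h"
    and best: "\<And>\<xi>. feasible A pe pb q xs as n \<xi> \<tau>h \<Longrightarrow> obj A pe pb q xs as n \<xi> \<tau>h \<le> obj A pe pb q xs as n \<xi>h \<tau>h"
    using maxi unfolding is_maximizer_def by auto
  have Dpos: "D i > 0" if "i < n" for i using feas that unfolding feasible_def D_def by auto
  have Deq: "D i = 1 + \<xi>h * (w i - 1) + G i" for i unfolding D_def by (rule Dlin)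
  have wnn: "w i \<ge> 0" if "i < n" for i
    using data[OF that] pe_dist unfolding w_def iw_def by auto
  define f where "f y = (\<Sum>i<n. ln (1 + y * (w i - 1) + G i)) / real n" for y
  have fobj: "f y = obj A pe pb q xs as n y \<tau>h" for y
    unfolding f_def obj_def En_def Dlin ..
  have der: "(f has_real_derivative (\<Sum>i<n. (w i - 1) / D i) / real n) (at \<xi>h)"
    unfolding f_def
  proof (intro DERIV_cdivide DERIV_sum)
    fix i assume "i \<in> {..<n}"
    then have p: "0 < D i" using Dpos by simp
    have l: "DERIV ln (D i) :> 1 / D i" by (rule DERIV_ln_divide[OF p])
    have in1: "((\<lambda>y. 1 + y * (w i - 1) + G i) has_real_derivative (w i - 1)) (at \<xi>h)"
      by (auto intro!: derivative_eq_intros)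
    have "((\<lambda>y. ln (1 + y * (w i - 1) + G i)) has_real_derivative (1 / D i) * (w i - 1)) (at \<xi>h)"
      using DERIV_chain2[OF l[unfolded Deq] in1] Deq by simp
    then show "((\<lambda>y. ln (1 + y * (w i - 1) + G i)) has_real_derivative (w i - 1) / D i) (at \<xi>h)"
      by simp
  qed
  have ev: "eventually (\<lambda>y. \<forall>i\<in>{..<n}. 0 < 1 + y * (w i - 1) + G i) (nhds \<xi>h)"
  proof (rule eventually_ball_finite[OF finite_lessThan], intro ballI)
    fix i assume "i \<in> {..<n}"
    then have i: "i < n" by simp
    have "((\<lambda>y. 1 + y * (w i - 1) + G i) \<longlongrightarrow> D i) (nhds \<xi>h)"
      unfolding Deq by (intro tendsto_intros) (simp add: tendsto_ident_at filterlim_ident)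
    then show "eventually (\<lambda>y. 0 < 1 + y * (w i - 1) + G i) (nhds \<xi>h)"
      using Dpos[OF i] by (rule order_tendstoD)
  qed
  then obtain d where d: "d > 0" and dP: "\<And>y. dist y \<xi>h < d \<Longrightarrow> \<forall>i\<in>{..<n}. 0 < 1 + y * (w i - 1) + G i"
    unfolding eventually_nhds_metric by blast
  have "\<forall>y. \<bar>\<xi>h - y\<bar> < d \<longrightarrow> f y \<le> f \<xi>h"
  proof (intro allI impI)
    fix y assume "\<bar>\<xi>h - y\<bar> < d"
    then have "dist y \<xi>h < d" by (simp add: dist_real_def abs_minus_commute)
    then have "feasible A pe pb q xs as n y \<tau>h" using dP unfolding feasible_def Dlin by auto
    then show "f y \<le> f \<xi>h" unfolding fobj by (rule best)
  qed
  from DERIV_local_max[OF der d this] have "(\<Sum>i<n. (w i - 1) / D i) / real n = 0" .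
  then have foc0: "(\<Sum>i<n. (w i - 1) / D i) = 0" using n_pos by simp
  define S where "S = (\<Sum>i<n. 1 / D i)"
  have Spos: "S > 0" unfolding S_def using n_pos Dpos by (intro sum_pos) auto
  have SW: "(\<Sum>i<n. w i / D i) = S"
  proof -
    have "(\<Sum>i<n. (w i - 1) / D i) = (\<Sum>i<n. w i / D i) - S"
      unfolding S_def by (simp add: sum_subtractf[symmetric] diff_divide_distrib)
    then show ?thesis using foc0 by simp
  qed
  define c where "c i = w i / (D i * S)" for i
  have cnn: "c i \<ge> 0" if "i < n" for i using wnn[OF that] Dpos[OF that] Spos unfolding c_def by simp
  have csum: "(\<Sum>i<n. c i) = 1"
  proof -
    have "(\<Sum>i<n. c i) = (\<Sum>i<n. w i / D i) / S" unfolding c_def by (simp add: sum_divide_distrib)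
    then show ?thesis using SW Spos by simp
  qed
  have beta: "beta_emp A pe pb q xs as n \<xi>h \<tau>h r = (\<Sum>i<n. c i * r i)" for r
  proof -
    have ch: "chat A pe pb q xs as n \<xi>h \<tau>h = S / real n"
      unfolding chat_def En_def S_def D_def ..
    have "beta_emp A pe pb q xs as n \<xi>h \<tau>h r = (\<Sum>i<n. real n / S * w i * r i / D i) / real n"
      unfolding beta_emp_def En_def ch w_def D_def by simp
    also have "\<dots> = (\<Sum>i<n. c i * r i)"
      unfolding sum_divide_distrib
      by (rule sum.cong[OF refl]) (use n_pos Spos Dpos in \<open>auto simp: c_def field_simps\<close>)
    finally show ?thesis .
  qed
  have cle1: "c i \<le> 1" if "i < n" for i
  proof -
    have "c i \<le> (\<Sum>j<n. c j)" by (rule member_le_sum) (use that cnn in auto)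
    then show ?thesis using csum by simp
  qed
  show ?thesis
  proof (intro conjI allI impI)
    fix r :: "nat \<Rightarrow> real" assume r: "\<forall>i<n. 0 \<le> r i \<and> r i \<le> Rmax"
    show "0 \<le> beta_emp A pe pb q xs as n \<xi>h \<tau>h r"
      unfolding beta using r cnn by (intro sum_nonneg) auto
    have "(\<Sum>i<n. c i * r i) \<le> (\<Sum>i<n. c i * Rmax)"
      using r cnn by (intro sum_mono mult_left_mono) auto
    also have "\<dots> = Rmax" using csum by (simp add: sum_distrib_right[symmetric])
    finally show "beta_emp A pe pb q xs as n \<xi>h \<tau>h r \<le> Rmax" unfolding beta .
  next
    fix M :: "'w measure" and R :: "nat \<Rightarrow> 'w \<Rightarrow> real" and \<sigma> :: real
    assume H: "prob_space M \<and>
            (\<forall>i<n. R i \<in> borel_measurable M \<and> (\<forall>\<omega>\<in>space M. 0 \<le> R i \<omega> \<and> R i \<omega> \<le> Rmax)) \<and>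
            prob_space.indep_vars M (\<lambda>_. borel) R {..<n} \<and>
            (\<forall>i<n. var_of M (R i) \<le> \<sigma>\<^sup>2)"
    have "var_of M (\<lambda>\<omega>. beta_emp A pe pb q xs as n \<xi>h \<tau>h (\<lambda>i. R i \<omega>)) = var_of M (\<lambda>\<omega>. \<Sum>i<n. c i * R i \<omega>)"
      unfolding beta ..
    also have "\<dots> = (\<Sum>i<n. (c i)\<^sup>2 * var_of M (R i))"
    proof (rule var_lin[where B="\<bar>Rmax\<bar>"])
      fix i \<omega> assume "i \<in> {..<n}" "\<omega> \<in> space M"
      then have "0 \<le> R i \<omega> \<and> R i \<omega> \<le> Rmax" using H by auto
      then show "\<bar>R i \<omega>\<bar> \<le> \<bar>Rmax\<bar>" by auto
    qed (use H in auto)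
    also have "\<dots> \<le> (\<Sum>i<n. c i * \<sigma>\<^sup>2)"
    proof (rule sum_mono)
      fix i assume "i \<in> {..<n}"
      then have i: "i < n" by simp
      have "(c i)\<^sup>2 \<le> c i" using cnn[OF i] cle1[OF i] by (simp add: power2_eq_square mult_left_le)
      moreover have "var_of M (R i) \<le> \<sigma>\<^sup>2" using H i by auto
      moreover have "0 \<le> var_of M (R i)" unfolding var_of_def by simp
      ultimately show "(c i)\<^sup>2 * var_of M (R i) \<le> c i * \<sigma>\<^sup>2"
        using cnn[OF i] by (meson mult_mono zero_le_power2 order_trans mult_left_mono)
    qed
    also have "\<dots> = \<sigma>\<^sup>2" using csum by (simp add: sum_distrib_right[symmetric])
    finally show "var_of M (\<lambda>\<omega>. beta_emp A pe pb q xs as n \<xi>h \<tau>h (\<lambda>i. R i \<omega>)) \<le> \<sigma>\<^sup>2" .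
  qed
qed

end
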